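(* Let $K$ be a nonempty finite set and $X=\Delta(K)$. 1. For each finite set $S$, the posterior mapping $\psi_S$ is $1$-Lipschitz from $(\Delta(K\times S),\|\cdot\|_1)$ to $(\Delta_f(X),d_* )$. 2. For all $u,v\in\Delta_f(X)$, $$d_*(u,v)=\inf\{\|\pi-\pi'\|_1:\ S\text{ finite},\ \pi,\pi'\in\Delta(K\times S),\ \psi_S(\pi)=u,\ \psi_S(\pi')=v\}.$$
   Context: $\Delta_f(X)$ is the set of finitely supported probabilities on $X=\Delta(K)$. For $\pi\in\Delta(K\times S)$, $\|\pi\|_1=\sum_{k,s}|\pi(k,s)|$. For a finite set $S$, $\psi_S:\Delta(K\times S)\to\Delta_f(X)$ is defined by $\psi_S(\pi)=\sum_{s\in S}\pi(s)\delta_{p(s)}$, where: - $\pi(s)=\sum_k\pi(k,s)$, and - $p(s)\in X$ is given by $p^k(s)=\pi(k,s)/\pi(s)$ (arbitrary if $\pi(s)=0$). $D_1=\{f\in\mathcal C(X):\ \forall x,y\in X,\ \forall a,b\ge0,\ af(x)-bf(y)\le\|ax-by\|_1\}$, and $d_*(u,v)=\sup_{f\in D_1}\big(u(f)-v(f)\big)$ with $u(f)=\sum_xu(x)f(x)$. *)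

theory Defs
  imports "HOL-Analysis.Analysis"
begin

text \<open>K is modelled as a finite (hence nonempty) type 'k. X = Delta(K) is the DeltaK.\<close>

definition DeltaK :: "('k::finite \<Rightarrow> real) set" where
  "DeltaK = {x. (\<forall>k. 0 \<le> x k) \<and> (\<Sum>k\<in>UNIV. x k) = 1}"

definition DeltaF :: "(('k::finite \<Rightarrow> real) \<Rightarrow> real) set" where
  "DeltaF = {u. finite {x. u x \<noteq> 0} \<and> (\<forall>x. 0 \<le> u x) \<and> {x. u x \<noteq> 0} \<subseteq> DeltaK
              \<and> (\<Sum>x\<in>{x. u x \<noteq> 0}. u x) = 1}"

definition DeltaKS :: "'s set \<Rightarrow> ('k::finite \<times> 's \<Rightarrow> real) set" where
  "DeltaKS S = {\<pi>. (\<forall>ks. 0 \<le> \<pi> ks) \<and> (\<forall>k s. s \<notin> S \<longrightarrow> \<pi> (k, s) = 0)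
                 \<and> (\<Sum>ks\<in>UNIV \<times> S. \<pi> ks) = 1}"

definition l1dist :: "'s set \<Rightarrow> ('k::finite \<times> 's \<Rightarrow> real) \<Rightarrow> ('k \<times> 's \<Rightarrow> real) \<Rightarrow> real" where
  "l1dist S \<pi> \<pi>' = (\<Sum>ks\<in>UNIV \<times> S. \<bar>\<pi> ks - \<pi>' ks\<bar>)"

definition marg :: "('k::finite \<times> 's \<Rightarrow> real) \<Rightarrow> 's \<Rightarrow> real" where
  "marg \<pi> s = (\<Sum>k\<in>UNIV. \<pi> (k, s))"

text \<open>Posterior p(s); when marg = 0 it is the (arbitrary) zero vector, irrelevant since the weight is 0.\<close>
definition post :: "('k::finite \<times> 's \<Rightarrow> real) \<Rightarrow> 's \<Rightarrow> ('k \<Rightarrow> real)" where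
  "post \<pi> s = (\<lambda>k. \<pi> (k, s) / marg \<pi> s)"

text \<open>psi_S(pi) = sum_s pi(s) delta_{p(s)}, as a weight function on X.\<close>
definition psi :: "'s set \<Rightarrow> ('k::finite \<times> 's \<Rightarrow> real) \<Rightarrow> ('k \<Rightarrow> real) \<Rightarrow> real" where
  "psi S \<pi> x = (\<Sum>s\<in>{s\<in>S. post \<pi> s = x}. marg \<pi> s)"

definition norm1 :: "('k::finite \<Rightarrow> real) \<Rightarrow> real" where
  "norm1 x = (\<Sum>k\<in>UNIV. \<bar>x k\<bar>)"

definition D1 :: "(('k::finite \<Rightarrow> real) \<Rightarrow> real) set" where
  "D1 = {f. continuous_on DeltaK f \<and>
            (\<forall>x\<in>DeltaK. \<forall>y\<in>DeltaK. \<forall>a b. 0 \<le> a \<longrightarrow> 0 \<le> b \<longrightarrow>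
               a * f x - b * f y \<le> norm1 (\<lambda>k. a * x k - b * y k))}"

definition integ :: "(('k::finite \<Rightarrow> real) \<Rightarrow> real) \<Rightarrow> (('k \<Rightarrow> real) \<Rightarrow> real) \<Rightarrow> real" where
  "integ u f = (\<Sum>x\<in>{x. u x \<noteq> 0}. u x * f x)"

definition dstar :: "(('k::finite \<Rightarrow> real) \<Rightarrow> real) \<Rightarrow> (('k \<Rightarrow> real) \<Rightarrow> real) \<Rightarrow> real" where
  "dstar u v = (SUP f\<in>D1. integ u f - integ v f)"

end

theory Submission
  imports Defs
begin

lemma fm_farkas:
  fixes C :: "(('v \<Rightarrow> real) \<times> real) set" and V :: "'v set"
  assumes "finite V" "finite C"
   and "\<And>l. (\<forall>r\<in>C. 0 \<le> l r) \<Longrightarrow> (\<forall>v\<in>V. (\<Sum>r\<in>C. l r * fst r v) = 0) \<Longrightarrow> 0 \<le> (\<Sum>r\<in>C. l r * snd r)"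
  shows "\<exists>x. \<forall>r\<in>C. (\<Sum>v\<in>V. fst r v * x v) \<le> snd r"
  using assms
proof (induction V arbitrary: C rule: finite_induct)
  case empty
  show ?case
  proof (intro exI ballI)
    fix r assume r: "r \<in> C"
    have "0 \<le> (\<Sum>r'\<in>C. (if r' = r then 1 else 0) * snd r')"
      by (rule empty.prems(2)) auto
    also have "\<dots> = (\<Sum>r'\<in>C. if r' = r then snd r' else 0)" by (rule sum.cong) auto
    also have "\<dots> = snd r" using r empty.prems(1) by simp
    finally show "(\<Sum>v\<in>{}. fst r v * (\<lambda>_. 0) v) \<le> snd r" by simp
  qed
next
  case (insert w V)
  define a where "a r = fst r w" for r :: "('v \<Rightarrow> real) \<times> real"
  define Z where "Z = {r\<in>C. a r = 0}"
  define P where "P = {r\<in>C. a r > 0}"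
  define N where "N = {r\<in>C. a r < 0}"
  define comb where "comb p n = ((\<lambda>v. (- a n) * fst p v + a p * fst n v), (- a n) * snd p + a p * snd n)" for p n
  define C' where "C' = Z \<union> (\<lambda>pn. comb (fst pn) (snd pn)) ` (P \<times> N)"
  have finC: "finite C" by fact
  have fin': "finite C'" unfolding C'_def Z_def P_def N_def using finC by auto
  define W where "W r' r = (if r' \<in> Z then (if r = r' then 1 else 0) else
     (let pn = (SOME pn. pn \<in> P \<times> N \<and> comb (fst pn) (snd pn) = r') in
       (if r = fst pn then - a (snd pn) else 0) + (if r = snd pn then a (fst pn) else 0)))" for r' r
  have Wpos: "0 \<le> W r' r" if "r' \<in> C'" for r' r
  proof (cases "r' \<in> Z")
    case True then show ?thesis by (simp add: W_def)
  next
    case False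
    then have "\<exists>pn. pn \<in> P \<times> N \<and> comb (fst pn) (snd pn) = r'" using that unfolding C'_def image_def by blast
    then have "(SOME pn. pn \<in> P \<times> N \<and> comb (fst pn) (snd pn) = r') \<in> P \<times> N" by (rule someI2_ex) auto
    then show ?thesis using False unfolding W_def P_def N_def Let_def by (auto)
  qed
  have Wsum: "(\<Sum>r\<in>C. W r' r * \<Phi> r) = \<Phi> r'"
    if r': "r' \<in> C'" and hom: "\<And>p n. \<Phi> (comb p n) = (- a n) * \<Phi> p + a p * \<Phi> n" for r' \<Phi>
  proof (cases "r' \<in> Z")
    case True
    then have "r' \<in> C" by (simp add: Z_def)
    have "(\<Sum>r\<in>C. W r' r * \<Phi> r) = (\<Sum>r\<in>C. if r = r' then \<Phi> r else 0)"
      using True by (intro sum.cong) (auto simp: W_def)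
    then show ?thesis using \<open>r' \<in> C\<close> finC by simp
  next
    case False
    then have ex: "\<exists>pn. pn \<in> P \<times> N \<and> comb (fst pn) (snd pn) = r'" using that unfolding C'_def image_def by blast
    define q where "q = (SOME pn. pn \<in> P \<times> N \<and> comb (fst pn) (snd pn) = r')"
    have pn: "q \<in> P \<times> N \<and> comb (fst q) (snd q) = r'"
      unfolding q_def by (rule someI_ex) (rule ex)
    obtain p n where pn_eq: "q = (p, n)" by (cases q)
    have pn_eq': "(SOME pn. pn \<in> P \<times> N \<and> comb (fst pn) (snd pn) = r') = (p, n)" using pn_eq q_def by simp
    have p: "p \<in> C" "a p > 0" and n: "n \<in> C" "a n < 0" and c: "comb p n = r'"
      using pn unfolding pn_eq P_def N_def by auto
    have pn_ne: "p \<noteq> n" using p n by auto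
    have "(\<Sum>r\<in>C. W r' r * \<Phi> r) = (\<Sum>r\<in>C. (if r = p then - a n * \<Phi> r else 0) + (if r = n then a p * \<Phi> r else 0))"
      using False by (intro sum.cong) (auto simp: W_def pn_eq' Let_def algebra_simps)
    also have "\<dots> = - a n * \<Phi> p + a p * \<Phi> n"
      using p n finC by (simp add: sum.distrib sum.delta)
    finally show ?thesis using hom[of p n] c by simp
  qed
  have hyp': "0 \<le> (\<Sum>r\<in>C'. l r * snd r)"
    if l0: "\<forall>r\<in>C'. 0 \<le> l r" and lV: "\<forall>v\<in>V. (\<Sum>r\<in>C'. l r * fst r v) = 0" for l
  proof -
    define L where "L r = (\<Sum>r'\<in>C'. l r' * W r' r)" for r
    have swap: "(\<Sum>r\<in>C. L r * \<Phi> r) = (\<Sum>r'\<in>C'. l r' * \<Phi> r')"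
      if hom: "\<And>p n. \<Phi> (comb p n) = (- a n) * \<Phi> p + a p * \<Phi> n" for \<Phi>
    proof -
      have "(\<Sum>r\<in>C. L r * \<Phi> r) = (\<Sum>r\<in>C. \<Sum>r'\<in>C'. l r' * (W r' r * \<Phi> r))"
        unfolding L_def by (simp add: sum_distrib_right mult.assoc)
      also have "\<dots> = (\<Sum>r'\<in>C'. l r' * (\<Sum>r\<in>C. W r' r * \<Phi> r))"
        by (subst sum.swap) (simp add: sum_distrib_left)
      also have "\<dots> = (\<Sum>r'\<in>C'. l r' * \<Phi> r')"
        using Wsum hom by (intro sum.cong) auto
      finally show ?thesis .
    qed
    have L0: "\<forall>r\<in>C. 0 \<le> L r" unfolding L_def using l0 Wpos by (auto intro!: sum_nonneg)
    have zero_w: "fst r' w = 0" if "r' \<in> C'" for r'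
      using that unfolding C'_def Z_def comb_def a_def by auto
    have "\<forall>v\<in>insert w V. (\<Sum>r\<in>C. L r * fst r v) = 0"
    proof
      fix v assume v: "v \<in> insert w V"
      have "(\<Sum>r\<in>C. L r * fst r v) = (\<Sum>r'\<in>C'. l r' * fst r' v)"
        by (rule swap) (simp add: comb_def)
      also have "\<dots> = 0"
      proof (cases "v = w")
        case True then show ?thesis using zero_w by simp
      next
        case False then show ?thesis using v lV by auto
      qed
      finally show "(\<Sum>r\<in>C. L r * fst r v) = 0" .
    qed
    then have "0 \<le> (\<Sum>r\<in>C. L r * snd r)" using insert.prems(2) L0 by blast
    also have "\<dots> = (\<Sum>r'\<in>C'. l r' * snd r')" by (rule swap) (simp add: comb_def)
    finally show ?thesis .
  qed
  obtain x where x: "\<forall>r\<in>C'. (\<Sum>v\<in>V. fst r v * x v) \<le> snd r"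
    using insert.IH[OF fin' hyp'] by blast
  define d where "d r = snd r - (\<Sum>v\<in>V. fst r v * x v)" for r
  have dZ: "0 \<le> d r" if "r \<in> Z" for r using x that unfolding C'_def d_def by auto
  have dPN: "d n / a n \<le> d p / a p" if p: "p \<in> P" and n: "n \<in> N" for p n
  proof -
    have "comb p n \<in> C'" unfolding C'_def using p n by force
    then have "(\<Sum>v\<in>V. fst (comb p n) v * x v) \<le> snd (comb p n)" using x by blast
    then have "(- a n) * (\<Sum>v\<in>V. fst p v * x v) + a p * (\<Sum>v\<in>V. fst n v * x v) \<le> (- a n) * snd p + a p * snd n"
      by (simp add: comb_def algebra_simps sum.distrib sum_subtractf sum_distrib_left sum_negf)
    then have "0 \<le> (- a n) * d p + a p * d n" by (simp add: d_def algebra_simps)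
    moreover have "a p > 0" "a n < 0" using p n by (auto simp: P_def N_def)
    ultimately show ?thesis by (simp add: divide_simps) (smt (verit) mult.commute)
  qed
  define xw where "xw = (if P = {} then (if N = {} then 0 else Max ((\<lambda>r. d r / a r) ` N)) else Min ((\<lambda>r. d r / a r) ` P))"
  have finP: "finite P" "finite N" using finC by (auto simp: P_def N_def)
  have xwP: "xw \<le> d p / a p" if "p \<in> P" for p
    using that finP by (auto simp: xw_def)
  have xwN: "d n / a n \<le> xw" if "n \<in> N" for n
  proof (cases "P = {}")
    case True then show ?thesis using that finP by (auto simp: xw_def)
  next
    case False then show ?thesis using that finP dPN by (auto simp: xw_def Min_ge_iff)
  qed
  show ?case
  proof (intro exI ballI)
    fix r assume r: "r \<in> C"
    have "(\<Sum>v\<in>insert w V. fst r v * (x(w := xw)) v) = a r * xw + (\<Sum>v\<in>V. fst r v * x v)"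
      using insert.hyps by (simp add: a_def) (intro sum.cong, auto)
    also have "\<dots> \<le> snd r"
    proof -
      consider "a r = 0" | "a r > 0" | "a r < 0" by linarith
      then have "a r * xw \<le> d r"
      proof cases
        case 1 then show ?thesis using dZ r by (simp add: Z_def)
      next
        case 2 then have "xw \<le> d r / a r" using xwP r by (simp add: P_def)
        then show ?thesis using 2 by (simp add: le_divide_eq mult.commute)
      next
        case 3 then have "d r / a r \<le> xw" using xwN r by (simp add: N_def)
        then show ?thesis using 3 by (simp add: divide_le_eq mult.commute)
      qed
      then show ?thesis by (simp add: d_def)
    qed
    finally show "(\<Sum>v\<in>insert w V. fst r v * (x(w := xw)) v) \<le> snd r" .
  qed
qed



lemma farkas_idx:
  fixes A :: "'c \<Rightarrow> 'v \<Rightarrow> real" and b :: "'c \<Rightarrow> real"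
  assumes finV: "finite V" and finC: "finite C"
   and H: "\<And>l. (\<forall>c\<in>C. 0 \<le> l c) \<Longrightarrow> (\<forall>v\<in>V. (\<Sum>c\<in>C. l c * A c v) = 0) \<Longrightarrow> 0 \<le> (\<Sum>c\<in>C. l c * b c)"
  shows "\<exists>x. \<forall>c\<in>C. (\<Sum>v\<in>V. A c v * x v) \<le> b c"
proof -
  define row where "row c = (A c, b c)" for c
  define R where "R = row ` C"
  have key: "(\<Sum>c\<in>C. l (row c) / card {c'\<in>C. row c' = row c} * \<Phi> (row c)) = (\<Sum>r\<in>R. l r * \<Phi> r)" for l \<Phi>
  proof -
    have "(\<Sum>c\<in>C. l (row c) / card {c'\<in>C. row c' = row c} * \<Phi> (row c))
        = (\<Sum>r\<in>R. \<Sum>c\<in>{c\<in>C. row c = r}. l (row c) / card {c'\<in>C. row c' = row c} * \<Phi> (row c))"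
      unfolding R_def by (rule sum.image_gen) (rule finC)
    also have "\<dots> = (\<Sum>r\<in>R. l r * \<Phi> r)"
    proof (rule sum.cong[OF refl])
      fix r assume "r \<in> R"
      then have ne: "{c\<in>C. row c = r} \<noteq> {}" and fin: "finite {c\<in>C. row c = r}"
        using finC by (auto simp: R_def)
      have "(\<Sum>c\<in>{c\<in>C. row c = r}. l (row c) / card {c'\<in>C. row c' = row c} * \<Phi> (row c))
          = (\<Sum>c\<in>{c\<in>C. row c = r}. l r / card {c'\<in>C. row c' = r} * \<Phi> r)"
        by (rule sum.cong) auto
      also have "\<dots> = l r * \<Phi> r" using ne fin by (simp add: card_gt_0_iff)
      finally show "(\<Sum>c\<in>{c\<in>C. row c = r}. l (row c) / card {c'\<in>C. row c' = row c} * \<Phi> (row c)) = l r * \<Phi> r" .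
    qed
    finally show ?thesis .
  qed
  have "\<exists>x. \<forall>r\<in>R. (\<Sum>v\<in>V. fst r v * x v) \<le> snd r"
  proof (rule fm_farkas)
    show "finite V" "finite R" using finV finC by (auto simp: R_def)
    fix l assume l0: "\<forall>r\<in>R. 0 \<le> l r" and lV: "\<forall>v\<in>V. (\<Sum>r\<in>R. l r * fst r v) = 0"
    define m where "m c = l (row c) / card {c'\<in>C. row c' = row c}" for c
    have "0 \<le> (\<Sum>c\<in>C. m c * b c)"
    proof (rule H)
      show "\<forall>c\<in>C. 0 \<le> m c" using l0 by (auto simp: m_def R_def)
      show "\<forall>v\<in>V. (\<Sum>c\<in>C. m c * A c v) = 0"
      proof
        fix v assume "v \<in> V"
        have "(\<Sum>c\<in>C. m c * A c v) = (\<Sum>r\<in>R. l r * fst r v)"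
          using key[of l "\<lambda>r. fst r v"] by (simp add: m_def row_def)
        then show "(\<Sum>c\<in>C. m c * A c v) = 0" using lV \<open>v \<in> V\<close> by simp
      qed
    qed
    also have "(\<Sum>c\<in>C. m c * b c) = (\<Sum>r\<in>R. l r * snd r)"
      using key[of l "snd"] by (simp add: m_def row_def)
    finally show "0 \<le> (\<Sum>r\<in>R. l r * snd r)" .
  qed
  then show ?thesis by (auto simp: R_def row_def)
qed

lemma DeltaK_I: "(\<lambda>k. 1 / real CARD('k::finite)) \<in> (DeltaK :: ('k \<Rightarrow> real) set)"
  by (simp add: DeltaK_def)

lemma norm1_DeltaK: "x \<in> DeltaK \<Longrightarrow> (\<Sum>k\<in>UNIV. \<bar>x k\<bar>) = 1"
  by (simp add: DeltaK_def)

lemma D1E: "f \<in> D1 \<Longrightarrow> x \<in> DeltaK \<Longrightarrow> y \<in> DeltaK \<Longrightarrow> 0 \<le> a \<Longrightarrow> 0 \<le> b \<Longrightarrow>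
   a * f x - b * f y \<le> norm1 (\<lambda>k. a * x k - b * y k)"
  by (simp add: D1_def)

lemma D1_bound:
  assumes f: "f \<in> D1" and x: "x \<in> DeltaK"
  shows "\<bar>f x\<bar> \<le> 1"
proof -
  have n: "(\<Sum>k\<in>UNIV. \<bar>x k\<bar>) = 1" using x by (simp add: DeltaK_def)
  have "1 * f x - 0 * f x \<le> norm1 (\<lambda>k. 1 * x k - 0 * x k)" using D1E[OF f x x, of 1 0] by simp
  then have 1: "f x \<le> 1" using n by (simp add: norm1_def)
  have "0 * f x - 1 * f x \<le> norm1 (\<lambda>k. 0 * x k - 1 * x k)" using D1E[OF f x x, of 0 1] by simp
  then have 2: "- f x \<le> 1" using n by (simp add: norm1_def)
  show ?thesis using 1 2 by linarith
qed

lemma D1_pair: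
  fixes P Q :: "'k::finite \<Rightarrow> real"
  assumes f: "f \<in> D1" and P: "\<And>k. 0 \<le> P k" and Q: "\<And>k. 0 \<le> Q k"
  shows "sum P UNIV * f (\<lambda>k. P k / sum P UNIV) - sum Q UNIV * f (\<lambda>k. Q k / sum Q UNIV)
          \<le> (\<Sum>k\<in>UNIV. \<bar>P k - Q k\<bar>)"
proof -
  define a where "a = sum P UNIV"
  define b where "b = sum Q UNIV"
  have a0: "a \<ge> 0" "b \<ge> 0" using P Q by (auto simp: a_def b_def intro: sum_nonneg)
  have xD: "(\<lambda>k. P k / a) \<in> DeltaK" if "a > 0"
    using that P by (auto simp: DeltaK_def a_def simp flip: sum_divide_distrib)
  have yD: "(\<lambda>k. Q k / b) \<in> DeltaK" if "b > 0"
    using that Q by (auto simp: DeltaK_def b_def simp flip: sum_divide_distrib)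
  have Pa: "(\<Sum>k\<in>UNIV. \<bar>P k\<bar>) = a" using P by (simp add: a_def)
  have Qb: "(\<Sum>k\<in>UNIV. \<bar>Q k\<bar>) = b" using Q by (simp add: b_def)
  have P0: "P k = 0" if "a = 0" for k using that P unfolding a_def
    by (simp add: sum_nonneg_eq_0_iff)
  have Q0: "Q k = 0" if "b = 0" for k using that Q unfolding b_def
    by (simp add: sum_nonneg_eq_0_iff)
  have "a * f (\<lambda>k. P k / a) - b * f (\<lambda>k. Q k / b) \<le> (\<Sum>k\<in>UNIV. \<bar>P k - Q k\<bar>)"
  proof (cases "a > 0")
    case True
    note aT = True
    show ?thesis
    proof (cases "b > 0")
      case True
      have "a * f (\<lambda>k. P k / a) - b * f (\<lambda>k. Q k / b) \<le> norm1 (\<lambda>k. a * (P k / a) - b * (Q k / b))"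
        using D1E[OF f xD[OF aT] yD[OF True]] a0 by blast
      then show ?thesis using aT True by (simp add: norm1_def)
    next
      case False
      then have b: "b = 0" using a0 by simp
      have "f (\<lambda>k. P k / a) \<le> 1" using D1_bound[OF f xD[OF aT]] by simp
      then have "a * f (\<lambda>k. P k / a) \<le> a" using a0 by (simp add: mult_left_le)
      then show ?thesis using b Q0[OF b] Pa by simp
    qed
  next
    case False
    then have a: "a = 0" using a0 by simp
    show ?thesis
    proof (cases "b > 0")
      case True
      have "- f (\<lambda>k. Q k / b) \<le> 1" using D1_bound[OF f yD[OF True]] by simp
      then have "- (b * f (\<lambda>k. Q k / b)) \<le> b" using a0
        by (metis minus_mult_right mult.right_neutral mult_left_mono)
      then show ?thesis using a P0[OF a] Qb by simp
    next
      case False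
      then have "b = 0" using a0 by simp
      then show ?thesis using a by (simp add: sum_nonneg)
    qed
  qed
  then show ?thesis by (simp add: a_def b_def)
qed

lemma integ_psi:
  assumes S: "finite S"
  shows "integ (psi S \<pi>) f = (\<Sum>s\<in>S. marg \<pi> s * f (post \<pi> s))"
proof -
  have sub: "{x. psi S \<pi> x \<noteq> 0} \<subseteq> post \<pi> ` S"
  proof
    fix x assume "x \<in> {x. psi S \<pi> x \<noteq> 0}"
    then have "{s\<in>S. post \<pi> s = x} \<noteq> {}" unfolding psi_def by (intro notI) auto
    then show "x \<in> post \<pi> ` S" by blast
  qed
  have "(\<Sum>s\<in>S. marg \<pi> s * f (post \<pi> s)) = (\<Sum>x\<in>post \<pi> ` S. \<Sum>s\<in>{s\<in>S. post \<pi> s = x}. marg \<pi> s * f (post \<pi> s))"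
    by (rule sum.image_gen) (rule S)
  also have "\<dots> = (\<Sum>x\<in>post \<pi> ` S. psi S \<pi> x * f x)"
    unfolding psi_def by (intro sum.cong refl) (auto simp: sum_distrib_right)
  also have "\<dots> = (\<Sum>x\<in>{x. psi S \<pi> x \<noteq> 0}. psi S \<pi> x * f x)"
    by (rule sum.mono_neutral_right) (use S sub in auto)
  finally show ?thesis by (simp add: integ_def)
qed

lemma zero_D1: "(\<lambda>_. 0) \<in> D1"
  by (auto simp: D1_def norm1_def intro: sum_nonneg)

lemma part1:
  fixes \<pi> \<pi>' :: "'k::finite \<times> 's \<Rightarrow> real"
  assumes S: "finite S" and p: "\<pi> \<in> DeltaKS S" and p': "\<pi>' \<in> DeltaKS S"
  shows "dstar (psi S \<pi>) (psi S \<pi>') \<le> l1dist S \<pi> \<pi>'"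
  unfolding dstar_def
proof (rule cSUP_least)
  show "(D1 :: (('k \<Rightarrow> real) \<Rightarrow> real) set) \<noteq> {}" using zero_D1 by blast
  fix f :: "('k \<Rightarrow> real) \<Rightarrow> real" assume f: "f \<in> D1"
  have "integ (psi S \<pi>) f - integ (psi S \<pi>') f
      = (\<Sum>s\<in>S. marg \<pi> s * f (post \<pi> s) - marg \<pi>' s * f (post \<pi>' s))"
    using S by (simp add: integ_psi sum_subtractf)
  also have "\<dots> \<le> (\<Sum>s\<in>S. \<Sum>k\<in>UNIV. \<bar>\<pi> (k, s) - \<pi>' (k, s)\<bar>)"
  proof (rule sum_mono)
    fix s assume "s \<in> S"
    show "marg \<pi> s * f (post \<pi> s) - marg \<pi>' s * f (post \<pi>' s) \<le> (\<Sum>k\<in>UNIV. \<bar>\<pi> (k, s) - \<pi>' (k, s)\<bar>)"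
      using D1_pair[OF f, of "\<lambda>k. \<pi> (k, s)" "\<lambda>k. \<pi>' (k, s)"] p p'
      by (simp add: marg_def post_def DeltaKS_def)
  qed
  also have "\<dots> = l1dist S \<pi> \<pi>'"
    unfolding l1dist_def by (subst sum.swap) (simp add: sum.cartesian_product)
  finally show "integ (psi S \<pi>) f - integ (psi S \<pi>') f \<le> l1dist S \<pi> \<pi>'" .
qed




lemma lip_cont:
  fixes f :: "('k::finite \<Rightarrow> real) \<Rightarrow> real"
  assumes L: "\<And>x y. x \<in> S \<Longrightarrow> y \<in> S \<Longrightarrow> \<bar>f x - f y\<bar> \<le> (\<Sum>k\<in>UNIV. \<bar>x k - y k\<bar>)"
  shows "continuous_on S f"
  unfolding continuous_on_def
proof
  fix x assume x: "x \<in> S"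
  have c: "continuous_on UNIV (\<lambda>y::'k \<Rightarrow> real. \<Sum>k\<in>UNIV. \<bar>y k - x k\<bar>)"
    by (intro continuous_intros continuous_on_product_coordinates)
  have "((\<lambda>y. \<Sum>k\<in>UNIV. \<bar>y k - x k\<bar>) \<longlongrightarrow> (\<Sum>k\<in>UNIV. \<bar>x k - x k\<bar>)) (at x within S)"
    using c by (meson continuous_on_def UNIV_I tendsto_within_subset subset_UNIV)
  then have t0: "((\<lambda>y. \<Sum>k\<in>UNIV. \<bar>y k - x k\<bar>) \<longlongrightarrow> 0) (at x within S)" by simp
  have "((\<lambda>y. f y - f x) \<longlongrightarrow> 0) (at x within S)"
  proof (rule Lim_null_comparison[OF _ t0])
    show "\<forall>\<^sub>F y in at x within S. norm (f y - f x) \<le> (\<Sum>k\<in>UNIV. \<bar>y k - x k\<bar>)"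
      using L x by (auto simp: eventually_at_filter)
  qed
  then show "(f \<longlongrightarrow> f x) (at x within S)" by (simp add: LIM_zero_iff)
qed

lemma norm1_ge: "x \<in> DeltaK \<Longrightarrow> z \<in> DeltaK \<Longrightarrow> 0 \<le> t \<Longrightarrow> 0 \<le> a \<Longrightarrow>
   t - a \<le> norm1 (\<lambda>k. t * x k - a * z k)"
proof -
  assume x: "x \<in> DeltaK" and z: "z \<in> DeltaK" and "0 \<le> t" "0 \<le> a"
  have "t - a = (\<Sum>k\<in>UNIV. t * x k - a * z k)"
    using x z by (simp add: DeltaK_def sum_subtractf flip: sum_distrib_left)
  also have "\<dots> \<le> norm1 (\<lambda>k. t * x k - a * z k)" unfolding norm1_def by (rule sum_mono) simp
  finally show ?thesis .
qed

lemma norm1_scale: "0 \<le> a \<Longrightarrow> a * norm1 (\<lambda>k. w k) = norm1 (\<lambda>k. a * w k)"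
  by (simp add: norm1_def sum_distrib_left abs_mult)

lemma norm1_tri: "norm1 (\<lambda>k. p k - q k) \<le> norm1 (\<lambda>k. p k - r k) + norm1 (\<lambda>k. r k - q k)"
  unfolding norm1_def by (simp flip: sum.distrib) (rule sum_mono, simp)

lemma dual_fun:
  fixes I J :: "('k::finite \<Rightarrow> real) set" and F G :: "('k \<Rightarrow> real) \<Rightarrow> real"
  assumes finI: "finite I" and Ine: "I \<noteq> {}" and ID: "I \<subseteq> DeltaK" and JD: "J \<subseteq> DeltaK"
    and F1: "\<And>i. i \<in> I \<Longrightarrow> F i \<le> 1"
    and FG: "\<And>i j t. i \<in> I \<Longrightarrow> j \<in> J \<Longrightarrow> 0 \<le> t \<Longrightarrow> t * F i - G j \<le> norm1 (\<lambda>k. t * i k - j k)"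
  shows "\<exists>f\<in>D1. (\<forall>i\<in>I. F i \<le> f i) \<and> (\<forall>j\<in>J. f j \<le> G j)"
proof -
  define Ix where "Ix = I \<times> {0::real..}"
  define tm where "tm z p = snd p * F (fst p) - norm1 (\<lambda>k. snd p * fst p k - z k)" for z and p :: "('k \<Rightarrow> real) \<times> real"
  define f where "f z = (SUP p\<in>Ix. tm z p)" for z
  have Ixne: "Ix \<noteq> {}" using Ine by (auto simp: Ix_def)
  have tm_le: "tm z p \<le> 1" if z: "z \<in> DeltaK" and p: "p \<in> Ix" for z p
  proof -
    have "snd p - 1 \<le> norm1 (\<lambda>k. snd p * fst p k - 1 * z k)"
      using p ID z by (intro norm1_ge) (auto simp: Ix_def)
    moreover have "snd p * F (fst p) \<le> snd p" using p F1 by (auto simp: Ix_def mult_left_le)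
    ultimately show ?thesis by (simp add: tm_def)
  qed
  have bdd: "bdd_above (tm z ` Ix)" if "z \<in> DeltaK" for z
  proof (rule bdd_aboveI2)
    fix p assume "p \<in> Ix" then show "tm z p \<le> 1" by (rule tm_le[OF that])
  qed
  have fge: "tm z p \<le> f z" if "z \<in> DeltaK" "p \<in> Ix" for z p
    unfolding f_def by (rule cSUP_upper[OF that(2) bdd[OF that(1)]])
  obtain i0 where i0: "i0 \<in> I" using Ine by blast
  have fm1: "- 1 \<le> f z" if z: "z \<in> DeltaK" for z
  proof -
    have "tm z (i0, 0) = - norm1 (\<lambda>k. - z k)" by (simp add: tm_def)
    also have "\<dots> = -1" using z by (simp add: norm1_def DeltaK_def)
    finally show ?thesis using fge[OF z, of "(i0, 0)"] i0 by (simp add: Ix_def)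
  qed
  have main: "a * f x - b * f y \<le> norm1 (\<lambda>k. a * x k - b * y k)"
    if x: "x \<in> DeltaK" and y: "y \<in> DeltaK" and a: "0 \<le> a" and b: "0 \<le> b" for x y a b
  proof (cases "a = 0")
    case True
    have "norm1 (\<lambda>k. a * x k - b * y k) = b" using True y b by (simp add: norm1_def DeltaK_def abs_mult flip: sum_distrib_left)
    moreover have "- (b * f y) \<le> b" using mult_left_mono[OF fm1[OF y] b] by simp
    ultimately show ?thesis using True by simp
  next
    case False
    then have apos: "a > 0" using a by simp
    define M where "M = (b * f y + norm1 (\<lambda>k. a * x k - b * y k)) / a"
    have "f x \<le> M"
      unfolding f_def
    proof (rule cSUP_least[OF Ixne])
      fix p assume p: "p \<in> Ix"
      obtain i t where pe: "p = (i, t)" and i: "i \<in> I" and t: "0 \<le> t" using p by (auto simp: Ix_def)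
      have iD: "i \<in> DeltaK" using i ID by auto
      define s where "s = a * t"
      have s0: "0 \<le> s" using a t by (simp add: s_def)
      have e1: "a * norm1 (\<lambda>k. t * i k - x k) = norm1 (\<lambda>k. s * i k - a * x k)"
      proof -
        have "a * norm1 (\<lambda>k. t * i k - x k) = norm1 (\<lambda>k. a * (t * i k - x k))"
          using a by (rule norm1_scale)
        also have "norm1 (\<lambda>k. a * (t * i k - x k)) = norm1 (\<lambda>k. s * i k - a * x k)"
          by (simp add: s_def algebra_simps)
        finally show ?thesis .
      qed
      have "a * tm x p = s * F i - norm1 (\<lambda>k. s * i k - a * x k)"
        using e1 by (simp add: tm_def pe s_def right_diff_distrib)
      also have "\<dots> \<le> b * f y + norm1 (\<lambda>k. a * x k - b * y k)"
      proof (cases "b = 0")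
        case True
        have "s - a \<le> norm1 (\<lambda>k. s * i k - a * x k)" using norm1_ge[OF iD x s0 a] .
        moreover have "s * F i \<le> s" using F1[OF i] s0 by (simp add: mult_left_le)
        moreover have "norm1 (\<lambda>k. a * x k - b * y k) = a" using True x a
          by (simp add: norm1_def DeltaK_def abs_mult flip: sum_distrib_left)
        ultimately show ?thesis using True by simp
      next
        case False
        then have bpos: "b > 0" using b by simp
        have "norm1 (\<lambda>k. s * i k - b * y k) \<le> norm1 (\<lambda>k. s * i k - a * x k) + norm1 (\<lambda>k. a * x k - b * y k)"
          by (rule norm1_tri)
        moreover have "s * F i - norm1 (\<lambda>k. s * i k - b * y k) = b * tm y (i, s / b)"
        proof -
          have "b * norm1 (\<lambda>k. s / b * i k - y k) = norm1 (\<lambda>k. b * (s / b * i k - y k))"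
            using b by (rule norm1_scale)
          also have "norm1 (\<lambda>k. b * (s / b * i k - y k)) = norm1 (\<lambda>k. s * i k - b * y k)"
            using bpos by (simp add: right_diff_distrib)
          finally show ?thesis using bpos by (simp add: tm_def right_diff_distrib)
        qed
        moreover have "b * tm y (i, s / b) \<le> b * f y"
        proof (rule mult_left_mono[OF _ b])
          show "tm y (i, s / b) \<le> f y" by (rule fge[OF y]) (use i s0 b in \<open>auto simp: Ix_def\<close>)
        qed
        ultimately show ?thesis by linarith
      qed
      finally show "tm x p \<le> M"
        using apos by (simp add: M_def le_divide_eq mult.commute)
    qed
    then show ?thesis using apos by (simp add: M_def le_divide_eq mult.commute)
  qed
  have cont: "continuous_on DeltaK f"
  proof (rule lip_cont)
    fix x y :: "'k \<Rightarrow> real" assume x: "x \<in> DeltaK" and y: "y \<in> DeltaK"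
    have 1: "f x - f y \<le> (\<Sum>k\<in>UNIV. \<bar>x k - y k\<bar>)" using main[OF x y, of 1 1] by (simp add: norm1_def)
    have 2: "f y - f x \<le> (\<Sum>k\<in>UNIV. \<bar>x k - y k\<bar>)" using main[OF y x, of 1 1] by (simp add: norm1_def abs_minus_commute)
    show "\<bar>f x - f y\<bar> \<le> (\<Sum>k\<in>UNIV. \<bar>x k - y k\<bar>)" using 1 2 by linarith
  qed
  have fD1: "f \<in> D1" using cont main by (auto simp: D1_def)
  have "F i \<le> f i" if i: "i \<in> I" for i
  proof -
    have "tm i (i, 1) = F i" by (simp add: tm_def norm1_def)
    then show ?thesis using fge[of i "(i, 1)"] i ID by (auto simp: Ix_def)
  qed
  moreover have "f j \<le> G j" if j: "j \<in> J" for j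
    unfolding f_def
  proof (rule cSUP_least[OF Ixne])
    fix p assume "p \<in> Ix"
    then show "tm j p \<le> G j" using FG[of "fst p" j "snd p"] j by (auto simp: Ix_def tm_def)
  qed
  ultimately show ?thesis using fD1 by blast
qed




definition mkpi :: "'q set \<Rightarrow> ('q \<Rightarrow> nat) \<Rightarrow> ('q \<Rightarrow> real) \<Rightarrow> ('q \<Rightarrow> 'k \<Rightarrow> real) \<Rightarrow> ('k \<times> nat \<Rightarrow> real)" where
  "mkpi Q e w pt = (\<lambda>(k, s). if s \<in> e ` Q then w (the_inv_into Q e s) * pt (the_inv_into Q e s) k else 0)"

lemma mkpi_at: "inj_on e Q \<Longrightarrow> q \<in> Q \<Longrightarrow> mkpi Q e w pt (k, e q) = w q * pt q k"
  by (simp add: mkpi_def the_inv_into_f_f)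

lemma mkpi_out: "s \<notin> e ` Q \<Longrightarrow> mkpi Q e w pt (k, s) = 0"
  by (simp add: mkpi_def)

lemma mkpi_marg: "inj_on e Q \<Longrightarrow> q \<in> Q \<Longrightarrow> pt q \<in> DeltaK \<Longrightarrow> marg (mkpi Q e w pt) (e q) = w q"
  by (simp add: marg_def mkpi_at DeltaK_def flip: sum_distrib_left)

lemma mkpi_psi:
  fixes pt :: "'q \<Rightarrow> ('k::finite \<Rightarrow> real)"
  assumes Q: "finite Q" and e: "inj_on e Q" and pD: "\<And>q. q \<in> Q \<Longrightarrow> pt q \<in> DeltaK"
  shows "psi (e ` Q) (mkpi Q e w pt) x = (\<Sum>q\<in>{q\<in>Q. pt q = x}. w q)"
proof -
  let ?p = "mkpi Q e w pt"
  have mq: "marg ?p (e q) = w q" if "q \<in> Q" for q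
    using e that pD[OF that] by (rule mkpi_marg[where e=e and Q=Q and pt=pt and w=w])
  have "psi (e ` Q) ?p x = (\<Sum>s\<in>e ` {q\<in>Q. post ?p (e q) = x}. marg ?p s)"
    unfolding psi_def by (rule sum.cong) auto
  also have "\<dots> = (\<Sum>q\<in>{q\<in>Q. post ?p (e q) = x}. marg ?p (e q))"
    by (rule sum.reindex_cong[where l=e]) (auto intro: inj_on_subset[OF e])
  also have "\<dots> = (\<Sum>q\<in>Q. if post ?p (e q) = x then w q else 0)"
    using Q by (simp add: sum.inter_filter mq)
  also have "\<dots> = (\<Sum>q\<in>Q. if pt q = x then w q else 0)"
  proof (rule sum.cong[OF refl])
    fix q assume q: "q \<in> Q"
    have m: "marg ?p (e q) = w q" using mq[OF q] .
    show "(if post ?p (e q) = x then w q else 0) = (if pt q = x then w q else 0)"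
    proof (cases "w q = 0")
      case True then show ?thesis by simp
    next
      case False
      then have "post ?p (e q) = pt q" using m by (simp add: post_def mkpi_at[OF e q] fun_eq_iff)
      then show ?thesis by simp
    qed
  qed
  also have "\<dots> = (\<Sum>q\<in>{q\<in>Q. pt q = x}. w q)" using Q by (simp add: sum.inter_filter)
  finally show ?thesis .
qed

lemma mkpi_sum_UNIV:
  fixes pt :: "'q \<Rightarrow> ('k::finite \<Rightarrow> real)"
  assumes Q: "finite Q" and e: "inj_on e Q"
  shows "(\<Sum>ks\<in>UNIV \<times> e ` Q. g (mkpi Q e w pt ks) (mkpi Q e w' pt' ks))
       = (\<Sum>q\<in>Q. \<Sum>k\<in>UNIV. g (w q * pt q k) (w' q * pt' q k))"
proof -
  have "(\<Sum>ks\<in>UNIV \<times> e ` Q. g (mkpi Q e w pt ks) (mkpi Q e w' pt' ks))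
      = (\<Sum>k\<in>UNIV. \<Sum>s\<in>e ` Q. g (mkpi Q e w pt (k, s)) (mkpi Q e w' pt' (k, s)))"
    by (simp add: sum.cartesian_product)
  also have "\<dots> = (\<Sum>s\<in>e ` Q. \<Sum>k\<in>UNIV. g (mkpi Q e w pt (k, s)) (mkpi Q e w' pt' (k, s)))"
    by (rule sum.swap)
  also have "\<dots> = (\<Sum>q\<in>Q. \<Sum>k\<in>UNIV. g (w q * pt q k) (w' q * pt' q k))"
    using e by (simp add: sum.reindex mkpi_at)
  finally show ?thesis .
qed

lemma mkpi_DeltaKS:
  fixes pt :: "'q \<Rightarrow> ('k::finite \<Rightarrow> real)"
  assumes Q: "finite Q" and e: "inj_on e Q" and pD: "\<And>q. q \<in> Q \<Longrightarrow> pt q \<in> DeltaK"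
    and w0: "\<And>q. q \<in> Q \<Longrightarrow> 0 \<le> w q" and w1: "(\<Sum>q\<in>Q. w q) = 1"
  shows "mkpi Q e w pt \<in> DeltaKS (e ` Q)"
proof -
  have nn: "0 \<le> mkpi Q e w pt ks" for ks
  proof (cases ks)
    case (Pair k s)
    show ?thesis
    proof (cases "s \<in> e ` Q")
      case True
      then obtain q where q: "q \<in> Q" "s = e q" by blast
      then show ?thesis using Pair w0[OF q(1)] pD[OF q(1)] by (simp add: mkpi_at[OF e] DeltaK_def)
    next
      case False then show ?thesis using Pair by (simp add: mkpi_out)
    qed
  qed
  have "(\<Sum>ks\<in>UNIV \<times> e ` Q. (\<lambda>a b. a) (mkpi Q e w pt ks) (mkpi Q e w pt ks))
      = (\<Sum>q\<in>Q. \<Sum>k\<in>UNIV. (\<lambda>a b. a) (w q * pt q k) (w q * pt q k))"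
    by (rule mkpi_sum_UNIV[OF Q e])
  also have "\<dots> = (\<Sum>q\<in>Q. w q)"
    using pD by (simp add: DeltaK_def flip: sum_distrib_left)
  finally have "(\<Sum>ks\<in>UNIV \<times> e ` Q. mkpi Q e w pt ks) = 1" using w1 by simp
  then show ?thesis using nn by (simp add: DeltaKS_def mkpi_out)
qed




datatype ('a, 'k) cvar = VG 'a 'a | VD 'a 'a | VT 'a 'a 'k
datatype ('a, 'k) ccon = NG 'a 'a | ND 'a 'a | RU 'a | RUm 'a | CV 'a | CVm 'a
  | UP 'a 'a 'k | LO 'a 'a 'k | TOT

fun cA :: "('k \<Rightarrow> real, 'k) ccon \<Rightarrow> ('k \<Rightarrow> real, 'k) cvar \<Rightarrow> real" where
  "cA (NG i j) w = (if w = VG i j then -1 else 0)"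
| "cA (ND i j) w = (if w = VD i j then -1 else 0)"
| "cA (RU i) w = (case w of VG i' j' \<Rightarrow> if i' = i then 1 else 0 | _ \<Rightarrow> 0)"
| "cA (RUm i) w = (case w of VG i' j' \<Rightarrow> if i' = i then -1 else 0 | _ \<Rightarrow> 0)"
| "cA (CV j) w = (case w of VD i' j' \<Rightarrow> if j' = j then 1 else 0 | _ \<Rightarrow> 0)"
| "cA (CVm j) w = (case w of VD i' j' \<Rightarrow> if j' = j then -1 else 0 | _ \<Rightarrow> 0)"
| "cA (UP i j k) w = (if w = VG i j then i k else if w = VD i j then - j k else if w = VT i j k then -1 else 0)"
| "cA (LO i j k) w = (if w = VG i j then - i k else if w = VD i j then j k else if w = VT i j k then -1 else 0)"
| "cA TOT w = (case w of VT _ _ _ \<Rightarrow> 1 | _ \<Rightarrow> 0)"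

fun cb :: "(('k \<Rightarrow> real) \<Rightarrow> real) \<Rightarrow> (('k \<Rightarrow> real) \<Rightarrow> real) \<Rightarrow> real \<Rightarrow> ('k \<Rightarrow> real, 'k) ccon \<Rightarrow> real" where
  "cb u v D (RU i) = u i"
| "cb u v D (RUm i) = - u i"
| "cb u v D (CV j) = v j"
| "cb u v D (CVm j) = - v j"
| "cb u v D TOT = D"
| "cb u v D _ = 0"

definition Vs :: "('a set) \<Rightarrow> 'a set \<Rightarrow> ('a, 'k) cvar set" where
  "Vs I J = case_prod VG ` (I \<times> J) \<union> case_prod VD ` (I \<times> J) \<union> (\<lambda>(i, j, k). VT i j k) ` (I \<times> J \<times> UNIV)"

definition Cs :: "('a set) \<Rightarrow> 'a set \<Rightarrow> ('a, 'k) ccon set" where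
  "Cs I J = case_prod NG ` (I \<times> J) \<union> case_prod ND ` (I \<times> J) \<union> RU ` I \<union> RUm ` I \<union> CV ` J \<union> CVm ` J
     \<union> (\<lambda>(i, j, k). UP i j k) ` (I \<times> J \<times> UNIV) \<union> (\<lambda>(i, j, k). LO i j k) ` (I \<times> J \<times> UNIV) \<union> {TOT}"

lemma finite_Vs: "finite I \<Longrightarrow> finite J \<Longrightarrow> finite (Vs I J :: ('a, 'k::finite) cvar set)"
  by (simp add: Vs_def)

lemma finite_Cs: "finite I \<Longrightarrow> finite J \<Longrightarrow> finite (Cs I J :: ('a, 'k::finite) ccon set)"
  by (simp add: Cs_def)

lemma sum_on: "finite A \<Longrightarrow> B \<subseteq> A \<Longrightarrow> (\<And>x. x \<in> A \<Longrightarrow> x \<notin> B \<Longrightarrow> g x = 0) \<Longrightarrow> sum g A = sum g B"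
  by (rule sum.mono_neutral_right) auto

lemma VT_img [simp]: "VT i j k \<in> (\<lambda>(i, j, k). VT i j k) ` (I \<times> J \<times> UNIV) \<longleftrightarrow> i \<in> I \<and> j \<in> J"
  by (auto simp: image_iff)
lemma UP_img [simp]: "UP i j k \<in> (\<lambda>(i, j, k). UP i j k) ` (I \<times> J \<times> UNIV) \<longleftrightarrow> i \<in> I \<and> j \<in> J"
  by (auto simp: image_iff)
lemma LO_img [simp]: "LO i j k \<in> (\<lambda>(i, j, k). LO i j k) ` (I \<times> J \<times> UNIV) \<longleftrightarrow> i \<in> I \<and> j \<in> J"
  by (auto simp: image_iff)

context
  fixes I J :: "('k::finite \<Rightarrow> real) set"
  assumes finI: "finite I" and finJ: "finite J"
begin

lemma primal_NG:
  assumes "i \<in> I" "j \<in> J"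
  shows "(\<Sum>w\<in>Vs I J. cA (NG i j) w * x w) = - x (VG i j)"
proof -
  have "(\<Sum>w\<in>Vs I J. cA (NG i j) w * x w) = (\<Sum>w\<in>{VG i j}. cA (NG i j) w * x w)"
    by (rule sum_on) (use assms finI finJ in \<open>auto simp: Vs_def finite_Vs split: if_splits\<close>)
  then show ?thesis by simp
qed

lemma primal_ND:
  assumes "i \<in> I" "j \<in> J"
  shows "(\<Sum>w\<in>Vs I J. cA (ND i j) w * x w) = - x (VD i j)"
proof -
  have "(\<Sum>w\<in>Vs I J. cA (ND i j) w * x w) = (\<Sum>w\<in>{VD i j}. cA (ND i j) w * x w)"
    by (rule sum_on) (use assms finI finJ in \<open>auto simp: Vs_def finite_Vs split: if_splits\<close>)
  then show ?thesis by simp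
qed

lemma primal_RU:
  assumes "i \<in> I"
  shows "(\<Sum>w\<in>Vs I J. cA (RU i) w * x w) = (\<Sum>j\<in>J. x (VG i j))"
    and "(\<Sum>w\<in>Vs I J. cA (RUm i) w * x w) = - (\<Sum>j\<in>J. x (VG i j))"
proof -
  have "(\<Sum>w\<in>Vs I J. cA (RU i) w * x w) = (\<Sum>w\<in>VG i ` J. cA (RU i) w * x w)"
    by (rule sum_on) (use assms finI finJ in \<open>auto simp: Vs_def finite_Vs split: if_splits\<close>)
  also have "\<dots> = (\<Sum>j\<in>J. x (VG i j))" by (subst sum.reindex) (auto simp: inj_on_def)
  finally show "(\<Sum>w\<in>Vs I J. cA (RU i) w * x w) = (\<Sum>j\<in>J. x (VG i j))" .
  have "(\<Sum>w\<in>Vs I J. cA (RUm i) w * x w) = (\<Sum>w\<in>VG i ` J. cA (RUm i) w * x w)"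
    by (rule sum_on) (use assms finI finJ in \<open>auto simp: Vs_def finite_Vs split: if_splits\<close>)
  also have "\<dots> = - (\<Sum>j\<in>J. x (VG i j))" by (subst sum.reindex) (auto simp: inj_on_def sum_negf)
  finally show "(\<Sum>w\<in>Vs I J. cA (RUm i) w * x w) = - (\<Sum>j\<in>J. x (VG i j))" .
qed

lemma primal_CV:
  assumes "j \<in> J"
  shows "(\<Sum>w\<in>Vs I J. cA (CV j) w * x w) = (\<Sum>i\<in>I. x (VD i j))"
    and "(\<Sum>w\<in>Vs I J. cA (CVm j) w * x w) = - (\<Sum>i\<in>I. x (VD i j))"
proof -
  have "(\<Sum>w\<in>Vs I J. cA (CV j) w * x w) = (\<Sum>w\<in>(\<lambda>i. VD i j) ` I. cA (CV j) w * x w)"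
    by (rule sum_on) (use assms finI finJ in \<open>auto simp: Vs_def finite_Vs split: if_splits\<close>)
  also have "\<dots> = (\<Sum>i\<in>I. x (VD i j))" by (subst sum.reindex) (auto simp: inj_on_def)
  finally show "(\<Sum>w\<in>Vs I J. cA (CV j) w * x w) = (\<Sum>i\<in>I. x (VD i j))" .
  have "(\<Sum>w\<in>Vs I J. cA (CVm j) w * x w) = (\<Sum>w\<in>(\<lambda>i. VD i j) ` I. cA (CVm j) w * x w)"
    by (rule sum_on) (use assms finI finJ in \<open>auto simp: Vs_def finite_Vs split: if_splits\<close>)
  also have "\<dots> = - (\<Sum>i\<in>I. x (VD i j))" by (subst sum.reindex) (auto simp: inj_on_def sum_negf)
  finally show "(\<Sum>w\<in>Vs I J. cA (CVm j) w * x w) = - (\<Sum>i\<in>I. x (VD i j))" .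
qed

lemma primal_UP:
  assumes "i \<in> I" "j \<in> J"
  shows "(\<Sum>w\<in>Vs I J. cA (UP i j k) w * x w) = i k * x (VG i j) - j k * x (VD i j) - x (VT i j k)"
    and "(\<Sum>w\<in>Vs I J. cA (LO i j k) w * x w) = - i k * x (VG i j) + j k * x (VD i j) - x (VT i j k)"
proof -
  have "(\<Sum>w\<in>Vs I J. cA (UP i j k) w * x w) = (\<Sum>w\<in>{VG i j, VD i j, VT i j k}. cA (UP i j k) w * x w)"
    by (rule sum_on) (use assms finI finJ in \<open>auto simp: Vs_def finite_Vs split: if_splits\<close>)
  then show "(\<Sum>w\<in>Vs I J. cA (UP i j k) w * x w) = i k * x (VG i j) - j k * x (VD i j) - x (VT i j k)" by simp
  have "(\<Sum>w\<in>Vs I J. cA (LO i j k) w * x w) = (\<Sum>w\<in>{VG i j, VD i j, VT i j k}. cA (LO i j k) w * x w)"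
    by (rule sum_on) (use assms finI finJ in \<open>auto simp: Vs_def finite_Vs split: if_splits\<close>)
  then show "(\<Sum>w\<in>Vs I J. cA (LO i j k) w * x w) = - i k * x (VG i j) + j k * x (VD i j) - x (VT i j k)" by simp
qed

lemma primal_TOT:
  shows "(\<Sum>w\<in>Vs I J. cA TOT w * x w) = (\<Sum>(i, j, k)\<in>I \<times> J \<times> UNIV. x (VT i j k))"
proof -
  have "(\<Sum>w\<in>Vs I J. cA TOT w * x w) = (\<Sum>w\<in>(\<lambda>(i, j, k). VT i j k) ` (I \<times> J \<times> UNIV). cA TOT w * x w)"
    by (rule sum_on) (use finI finJ in \<open>auto simp: Vs_def finite_Vs split: if_splits\<close>)
  also have "\<dots> = (\<Sum>(i, j, k)\<in>I \<times> J \<times> UNIV. x (VT i j k))"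
    by (subst sum.reindex) (auto simp: inj_on_def intro!: sum.cong)
  finally show ?thesis .
qed

lemma dual_VT:
  assumes "i \<in> I" "j \<in> J"
  shows "(\<Sum>c\<in>Cs I J. l c * cA c (VT i j k)) = l TOT - l (UP i j k) - l (LO i j k)"
proof -
  have "(\<Sum>c\<in>Cs I J. l c * cA c (VT i j k)) = (\<Sum>c\<in>{TOT, UP i j k, LO i j k}. l c * cA c (VT i j k))"
    by (rule sum_on) (use assms finI finJ in \<open>auto simp: Cs_def finite_Cs split: if_splits\<close>)
  then show ?thesis by simp
qed

lemma dual_VG:
  assumes "i \<in> I" "j \<in> J"
  shows "(\<Sum>c\<in>Cs I J. l c * cA c (VG i j)) = - l (NG i j) + l (RU i) - l (RUm i)
           + (\<Sum>k\<in>UNIV. (l (UP i j k) - l (LO i j k)) * i k)"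
proof -
  have "(\<Sum>c\<in>Cs I J. l c * cA c (VG i j)) = (\<Sum>c\<in>{NG i j, RU i, RUm i} \<union> (range (UP i j) \<union> range (LO i j)). l c * cA c (VG i j))"
    by (rule sum_on) (use assms finI finJ in \<open>auto simp: Cs_def finite_Cs split: if_splits\<close>)
  also have "\<dots> = (\<Sum>c\<in>{NG i j, RU i, RUm i}. l c * cA c (VG i j)) + ((\<Sum>c\<in>range (UP i j). l c * cA c (VG i j)) + (\<Sum>c\<in>range (LO i j). l c * cA c (VG i j)))"
    by (subst sum.union_disjoint, auto)+
  also have "\<dots> = - l (NG i j) + l (RU i) - l (RUm i)
           + (\<Sum>k\<in>UNIV. (l (UP i j k) - l (LO i j k)) * i k)"
    by (simp add: sum.reindex inj_on_def left_diff_distrib sum_subtractf sum_negf)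
  finally show ?thesis .
qed

lemma dual_VD:
  assumes "i \<in> I" "j \<in> J"
  shows "(\<Sum>c\<in>Cs I J. l c * cA c (VD i j)) = - l (ND i j) + l (CV j) - l (CVm j)
           - (\<Sum>k\<in>UNIV. (l (UP i j k) - l (LO i j k)) * j k)"
proof -
  have "(\<Sum>c\<in>Cs I J. l c * cA c (VD i j)) = (\<Sum>c\<in>{ND i j, CV j, CVm j} \<union> (range (UP i j) \<union> range (LO i j)). l c * cA c (VD i j))"
    by (rule sum_on) (use assms finI finJ in \<open>auto simp: Cs_def finite_Cs split: if_splits\<close>)
  also have "\<dots> = (\<Sum>c\<in>{ND i j, CV j, CVm j}. l c * cA c (VD i j)) + ((\<Sum>c\<in>range (UP i j). l c * cA c (VD i j)) + (\<Sum>c\<in>range (LO i j). l c * cA c (VD i j)))"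
    by (subst sum.union_disjoint, auto)+
  also have "\<dots> = - l (ND i j) + l (CV j) - l (CVm j)
           - (\<Sum>k\<in>UNIV. (l (UP i j k) - l (LO i j k)) * j k)"
    by (simp add: sum.reindex inj_on_def left_diff_distrib sum_subtractf sum_negf)
  finally show ?thesis .
qed

lemma dual_obj:
  "(\<Sum>c\<in>Cs I J. l c * cb u v D c) = (\<Sum>i\<in>I. (l (RU i) - l (RUm i)) * u i) + (\<Sum>j\<in>J. (l (CV j) - l (CVm j)) * v j) + l TOT * D"
proof -
  have "(\<Sum>c\<in>Cs I J. l c * cb u v D c) = (\<Sum>c\<in>insert TOT ((RU ` I \<union> RUm ` I) \<union> (CV ` J \<union> CVm ` J)). l c * cb u v D c)"
    by (rule sum_on) (use finI finJ in \<open>auto simp: Cs_def finite_Cs split: if_splits\<close>)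
  also have "\<dots> = l TOT * D + (\<Sum>c\<in>(RU ` I \<union> RUm ` I) \<union> (CV ` J \<union> CVm ` J). l c * cb u v D c)"
    using finI finJ by (subst sum.insert) auto
  also have "\<dots> = l TOT * D + (((\<Sum>c\<in>RU ` I. l c * cb u v D c) + (\<Sum>c\<in>RUm ` I. l c * cb u v D c))
      + ((\<Sum>c\<in>CV ` J. l c * cb u v D c) + (\<Sum>c\<in>CVm ` J. l c * cb u v D c)))"
    using finI finJ by (subst sum.union_disjoint, auto)+
  also have "\<dots> = (\<Sum>i\<in>I. (l (RU i) - l (RUm i)) * u i) + (\<Sum>j\<in>J. (l (CV j) - l (CVm j)) * v j) + l TOT * D"
    by (simp add: sum.reindex inj_on_def left_diff_distrib sum_subtractf sum_negf)
  finally show ?thesis .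
qed

end




lemma hsum_le:
  assumes "\<And>k. \<bar>h k\<bar> \<le> L"
  shows "(\<Sum>k\<in>UNIV. h k * z k) \<le> L * norm1 z"
proof -
  have "(\<Sum>k\<in>UNIV. h k * z k) \<le> (\<Sum>k\<in>UNIV. L * \<bar>z k\<bar>)"
  proof (rule sum_mono)
    fix k
    have "h k * z k \<le> \<bar>h k\<bar> * \<bar>z k\<bar>" by (metis abs_ge_self abs_mult)
    also have "\<dots> \<le> L * \<bar>z k\<bar>" using assms[of k] by (rule mult_right_mono) simp
    finally show "h k * z k \<le> L * \<bar>z k\<bar>" .
  qed
  then show ?thesis by (simp add: norm1_def sum_distrib_left)
qed

lemma part2:
  fixes u v :: "('k::finite \<Rightarrow> real) \<Rightarrow> real"
  assumes u: "u \<in> DeltaF" and v: "v \<in> DeltaF"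
  shows "dstar u v = Inf {l1dist T \<pi> \<pi>' | (T :: nat set) \<pi> \<pi>'.
               finite T \<and> \<pi> \<in> DeltaKS T \<and> \<pi>' \<in> DeltaKS T \<and> psi T \<pi> = u \<and> psi T \<pi>' = v}"
proof -
  define I where "I = {x. u x \<noteq> 0}"
  define J where "J = {x. v x \<noteq> 0}"
  have finI: "finite I" and ID: "I \<subseteq> DeltaK" and u0: "\<And>x. 0 \<le> u x" and u1: "(\<Sum>x\<in>I. u x) = 1"
    using u by (auto simp: DeltaF_def I_def)
  have finJ: "finite J" and JD: "J \<subseteq> DeltaK" and v0: "\<And>x. 0 \<le> v x" and v1: "(\<Sum>x\<in>J. v x) = 1"
    using v by (auto simp: DeltaF_def J_def)
  have Ine: "I \<noteq> {}" using u1 by auto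
  have Jne: "J \<noteq> {}" using v1 by auto
  define D where "D = dstar u v"
  have intu: "integ u f = (\<Sum>x\<in>I. u x * f x)" for f by (simp add: integ_def I_def)
  have intv: "integ v f = (\<Sum>x\<in>J. v x * f x)" for f by (simp add: integ_def J_def)
  have bdd: "bdd_above ((\<lambda>f. integ u f - integ v f) ` D1)"
  proof (rule bdd_aboveI2)
    fix f :: "('k \<Rightarrow> real) \<Rightarrow> real" assume f: "f \<in> D1"
    have "(\<Sum>x\<in>I. u x * f x) \<le> (\<Sum>x\<in>I. u x * 1)"
    proof (rule sum_mono)
      fix x assume "x \<in> I"
      then have "f x \<le> 1" using D1_bound[OF f] ID by (auto simp: abs_le_iff)
      then show "u x * f x \<le> u x * 1" using u0 by (rule mult_left_mono)
    qed
    moreover have "(\<Sum>x\<in>J. v x * (- f x)) \<le> (\<Sum>x\<in>J. v x * 1)"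
    proof (rule sum_mono)
      fix x assume "x \<in> J"
      then have "- f x \<le> 1" using D1_bound[OF f] JD by (auto simp: abs_le_iff)
      then show "v x * (- f x) \<le> v x * 1" using v0 by (rule mult_left_mono)
    qed
    ultimately show "integ u f - integ v f \<le> 2" using u1 v1
      by (simp add: intu intv sum_negf)
  qed
  have Dge: "integ u f - integ v f \<le> D" if "f \<in> D1" for f
    unfolding D_def dstar_def by (rule cSUP_upper[OF that bdd])
  have memVG: "VG i j \<in> Vs I J" "VD i j \<in> Vs I J" "VT i j k \<in> Vs I J" if "i \<in> I" "j \<in> J" for i j k
    using that by (force simp: Vs_def)+
  have memC: "NG i j \<in> Cs I J" "ND i j \<in> Cs I J" "RU i \<in> Cs I J" "RUm i \<in> Cs I J"
    "CV j \<in> Cs I J" "CVm j \<in> Cs I J" "UP i j k \<in> Cs I J" "LO i j k \<in> Cs I J"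
    if "i \<in> I" "j \<in> J" for i j k
    using that by (force simp: Cs_def)+
  have memRU: "RU i \<in> Cs I J" "RUm i \<in> Cs I J" if "i \<in> I" for i using that by (auto simp: Cs_def)
  have memCV: "CV j \<in> Cs I J" "CVm j \<in> Cs I J" if "j \<in> J" for j using that by (auto simp: Cs_def)
  have memT: "TOT \<in> Cs I J" by (simp add: Cs_def)
  have "\<exists>x. \<forall>c\<in>Cs I J. (\<Sum>w\<in>Vs I J. cA c w * x w) \<le> cb u v D c"
  proof (rule farkas_idx)
    show "finite (Vs I J :: ('k \<Rightarrow> real, 'k) cvar set)" using finI finJ by (rule finite_Vs)
    show "finite (Cs I J :: ('k \<Rightarrow> real, 'k) ccon set)" using finI finJ by (rule finite_Cs)
    fix l :: "('k \<Rightarrow> real, 'k) ccon \<Rightarrow> real"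
    assume l0: "\<forall>c\<in>Cs I J. 0 \<le> l c" and lV: "\<forall>w\<in>Vs I J. (\<Sum>c\<in>Cs I J. l c * cA c w) = 0"
    define L where "L = l TOT"
    define \<rho> where "\<rho> i = l (RU i) - l (RUm i)" for i
    define \<sigma> where "\<sigma> j = l (CV j) - l (CVm j)" for j
    define h where "h i j k = l (UP i j k) - l (LO i j k)" for i j k
    have lV': "(\<Sum>c\<in>Cs I J. l c * cA c w) = 0" if "w \<in> Vs I J" for w using lV that by blast
    have L0: "0 \<le> L" unfolding L_def using l0 memT by blast
    have d1: "l (UP i j k) + l (LO i j k) = L" if "i \<in> I" "j \<in> J" for i j k
      using lV'[OF memVG(3)[OF that, of k]] dual_VT[OF finI finJ that, of l k] by (simp add: L_def)
    have l0': "0 \<le> l c" if "c \<in> Cs I J" for c using l0 that by blast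
    have hb: "\<bar>h i j k\<bar> \<le> L" if "i \<in> I" "j \<in> J" for i j k
    proof -
      have "0 \<le> l (UP i j k)" "0 \<le> l (LO i j k)" using l0' memC(7,8)[OF that, of k] by auto
      then show ?thesis using d1[OF that, of k] by (simp add: h_def abs_le_iff)
    qed
    have e1: "0 \<le> \<rho> i + (\<Sum>k\<in>UNIV. h i j k * i k)" if "i \<in> I" "j \<in> J" for i j
      using lV'[OF memVG(1)[OF that]] dual_VG[OF finI finJ that, of l] l0'[OF memC(1)[OF that]]
      unfolding \<rho>_def h_def by linarith
    have e2: "0 \<le> \<sigma> j - (\<Sum>k\<in>UNIV. h i j k * j k)" if "i \<in> I" "j \<in> J" for i j
      using lV'[OF memVG(2)[OF that]] dual_VD[OF finI finJ that, of l] l0'[OF memC(2)[OF that]]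
      unfolding \<sigma>_def h_def by linarith
    have obj: "(\<Sum>c\<in>Cs I J. l c * cb u v D c) = (\<Sum>i\<in>I. \<rho> i * u i) + (\<Sum>j\<in>J. \<sigma> j * v j) + L * D"
      using dual_obj[OF finI finJ, of l u v D] by (simp add: \<rho>_def \<sigma>_def L_def)
    show "0 \<le> (\<Sum>c\<in>Cs I J. l c * cb u v D c)"
    proof (cases "L = 0")
      case True
      have h0: "h i j k = 0" if "i \<in> I" "j \<in> J" for i j k using hb[OF that, of k] True by simp
      obtain j0 where j0: "j0 \<in> J" using Jne by blast
      obtain i0 where i0: "i0 \<in> I" using Ine by blast
      have "0 \<le> \<rho> i" if "i \<in> I" for i using e1[OF that j0] h0[OF that j0] by simp
      moreover have "0 \<le> \<sigma> j" if "j \<in> J" for j using e2[OF i0 that] h0[OF i0 that] by simp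
      ultimately show ?thesis using u0 v0 True obj by (simp add: sum_nonneg)
    next
      case False
      then have Lpos: "L > 0" using L0 by simp
      define F where "F i = - \<rho> i / L" for i
      define G where "G j = \<sigma> j / L" for j
      obtain j0 where j0: "j0 \<in> J" using Jne by blast
      have F1: "F i \<le> 1" if i: "i \<in> I" for i
      proof -
        have "- \<rho> i \<le> (\<Sum>k\<in>UNIV. h i j0 k * i k)" using e1[OF i j0] by simp
        also have "\<dots> \<le> L * norm1 i" by (rule hsum_le) (rule hb[OF i j0])
        also have "norm1 i = 1" using i ID by (auto simp: norm1_def DeltaK_def)
        finally show ?thesis using Lpos by (simp add: F_def le_divide_eq)
      qed
      have FG: "t * F i - G j \<le> norm1 (\<lambda>k. t * i k - j k)" if i: "i \<in> I" and j: "j \<in> J" and t: "0 \<le> t" for i j t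
      proof -
        have "- (t * \<rho> i) - \<sigma> j \<le> t * (\<Sum>k\<in>UNIV. h i j k * i k) - (\<Sum>k\<in>UNIV. h i j k * j k)"
          using mult_left_mono[OF e1[OF i j] t] e2[OF i j] by (simp add: algebra_simps)
        also have "\<dots> = (\<Sum>k\<in>UNIV. h i j k * (t * i k - j k))"
          by (simp add: sum_distrib_left sum_subtractf algebra_simps)
        also have "\<dots> \<le> L * norm1 (\<lambda>k. t * i k - j k)" by (rule hsum_le) (rule hb[OF i j])
        finally have "- (t * \<rho> i) - \<sigma> j \<le> L * norm1 (\<lambda>k. t * i k - j k)" .
        then show ?thesis using Lpos by (simp add: F_def G_def field_simps)
      qed
      obtain f where f: "f \<in> D1" and fF: "\<forall>i\<in>I. F i \<le> f i" and fG: "\<forall>j\<in>J. f j \<le> G j"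
        using dual_fun[OF finI Ine ID JD F1 FG] by blast
      have "(\<Sum>i\<in>I. u i * F i) - (\<Sum>j\<in>J. v j * G j) \<le> integ u f - integ v f"
      proof -
        have "(\<Sum>i\<in>I. u i * F i) \<le> (\<Sum>i\<in>I. u i * f i)"
          using fF u0 by (intro sum_mono mult_left_mono) auto
        moreover have "(\<Sum>j\<in>J. v j * f j) \<le> (\<Sum>j\<in>J. v j * G j)"
          using fG v0 by (intro sum_mono mult_left_mono) auto
        ultimately show ?thesis by (simp add: intu intv)
      qed
      also have "\<dots> \<le> D" by (rule Dge[OF f])
      finally have "(\<Sum>i\<in>I. u i * F i) - (\<Sum>j\<in>J. v j * G j) \<le> D" .
      then have "L * ((\<Sum>i\<in>I. u i * F i) - (\<Sum>j\<in>J. v j * G j)) \<le> L * D"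
        using L0 by (rule mult_left_mono)
      moreover have "L * ((\<Sum>i\<in>I. u i * F i) - (\<Sum>j\<in>J. v j * G j)) = - ((\<Sum>i\<in>I. \<rho> i * u i) + (\<Sum>j\<in>J. \<sigma> j * v j))"
        using Lpos by (simp add: F_def G_def right_diff_distrib sum_distrib_left sum_negf algebra_simps)
      ultimately show ?thesis using obj by linarith
    qed
  qed
  then obtain x where x: "\<forall>c\<in>Cs I J. (\<Sum>w\<in>Vs I J. cA c w * x w) \<le> cb u v D c" by blast
  have x': "(\<Sum>w\<in>Vs I J. cA c w * x w) \<le> cb u v D c" if "c \<in> Cs I J" for c using x that by blast
  define \<gamma> where "\<gamma> i j = x (VG i j)" for i j
  define \<delta> where "\<delta> i j = x (VD i j)" for i j
  define \<tau> where "\<tau> i j k = x (VT i j k)" for i j k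
  have g0: "0 \<le> \<gamma> i j" if "i \<in> I" "j \<in> J" for i j
    using x'[OF memC(1)[OF that]] primal_NG[OF finI finJ that, of x] by (simp add: \<gamma>_def)
  have d0: "0 \<le> \<delta> i j" if "i \<in> I" "j \<in> J" for i j
    using x'[OF memC(2)[OF that]] primal_ND[OF finI finJ that, of x] by (simp add: \<delta>_def)
  have gsum: "(\<Sum>j\<in>J. \<gamma> i j) = u i" if "i \<in> I" for i
    using x'[OF memRU(1)[OF that]] x'[OF memRU(2)[OF that]] primal_RU[OF finI finJ that, of x] by (force simp: \<gamma>_def)
  have dsum: "(\<Sum>i\<in>I. \<delta> i j) = v j" if "j \<in> J" for j
    using x'[OF memCV(1)[OF that]] x'[OF memCV(2)[OF that]] primal_CV[OF finI finJ that, of x] by (force simp: \<delta>_def)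
  have gt: "\<bar>\<gamma> i j * i k - \<delta> i j * j k\<bar> \<le> \<tau> i j k" if "i \<in> I" "j \<in> J" for i j k
    using x'[OF memC(7)[OF that, of k]] x'[OF memC(8)[OF that, of k]] primal_UP[OF finI finJ that, of k x]
    by (force simp: \<gamma>_def \<delta>_def \<tau>_def algebra_simps)
  have tsum: "(\<Sum>(i, j, k)\<in>I \<times> J \<times> UNIV. \<tau> i j k) \<le> D"
    using x'[OF memT] primal_TOT[OF finI finJ, of x] by (simp add: \<tau>_def)
  obtain e :: "('k \<Rightarrow> real) \<times> ('k \<Rightarrow> real) \<Rightarrow> nat" where e: "inj_on e (I \<times> J)"
    using finite_imp_inj_to_nat_seg[of "I \<times> J"] finI finJ by blast
  define Q where "Q = I \<times> J"
  have finQ: "finite Q" using finI finJ by (simp add: Q_def)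
  have eQ: "inj_on e Q" using e by (simp add: Q_def)
  define \<pi> where "\<pi> = mkpi Q e (\<lambda>q. \<gamma> (fst q) (snd q)) fst"
  define \<pi>' where "\<pi>' = mkpi Q e (\<lambda>q. \<delta> (fst q) (snd q)) snd"
  have fstD: "\<And>q. q \<in> Q \<Longrightarrow> fst q \<in> DeltaK" using ID by (auto simp: Q_def)
  have sndD: "\<And>q. q \<in> Q \<Longrightarrow> snd q \<in> DeltaK" using JD by (auto simp: Q_def)
  have psi1: "psi (e ` Q) \<pi> = u"
  proof
    fix z
    have "psi (e ` Q) \<pi> z = (\<Sum>q\<in>{q\<in>Q. fst q = z}. \<gamma> (fst q) (snd q))"
      unfolding \<pi>_def by (rule mkpi_psi[OF finQ eQ fstD])
    also have "\<dots> = u z"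
    proof (cases "z \<in> I")
      case True
      have "{q\<in>Q. fst q = z} = Pair z ` J" using True by (auto simp: Q_def)
      then have "(\<Sum>q\<in>{q\<in>Q. fst q = z}. \<gamma> (fst q) (snd q)) = (\<Sum>j\<in>J. \<gamma> z j)"
        by (simp add: sum.reindex inj_on_def)
      then show ?thesis using gsum[OF True] by simp
    next
      case False
      then have E: "{q\<in>Q. fst q = z} = {}" by (auto simp: Q_def)
      show ?thesis unfolding E using False by (simp add: I_def)
    qed
    finally show "psi (e ` Q) \<pi> z = u z" .
  qed
  have psi2: "psi (e ` Q) \<pi>' = v"
  proof
    fix z
    have "psi (e ` Q) \<pi>' z = (\<Sum>q\<in>{q\<in>Q. snd q = z}. \<delta> (fst q) (snd q))"
      unfolding \<pi>'_def by (rule mkpi_psi[OF finQ eQ sndD])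
    also have "\<dots> = v z"
    proof (cases "z \<in> J")
      case True
      have "{q\<in>Q. snd q = z} = (\<lambda>i. (i, z)) ` I" using True by (auto simp: Q_def)
      then have "(\<Sum>q\<in>{q\<in>Q. snd q = z}. \<delta> (fst q) (snd q)) = (\<Sum>i\<in>I. \<delta> i z)"
        by (simp add: sum.reindex inj_on_def)
      then show ?thesis using dsum[OF True] by simp
    next
      case False
      then have E: "{q\<in>Q. snd q = z} = {}" by (auto simp: Q_def)
      show ?thesis unfolding E using False by (simp add: J_def)
    qed
    finally show "psi (e ` Q) \<pi>' z = v z" .
  qed
  have pD: "\<pi> \<in> DeltaKS (e ` Q)"
    unfolding \<pi>_def
  proof (rule mkpi_DeltaKS[OF finQ eQ fstD])
    show "\<And>q. q \<in> Q \<Longrightarrow> 0 \<le> \<gamma> (fst q) (snd q)" using g0 by (auto simp: Q_def)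
    have "(\<Sum>q\<in>Q. \<gamma> (fst q) (snd q)) = (\<Sum>i\<in>I. \<Sum>j\<in>J. \<gamma> i j)"
      by (simp add: Q_def sum.cartesian_product case_prod_beta)
    also have "\<dots> = 1" using gsum u1 by simp
    finally show "(\<Sum>q\<in>Q. \<gamma> (fst q) (snd q)) = 1" .
  qed
  have pD': "\<pi>' \<in> DeltaKS (e ` Q)"
    unfolding \<pi>'_def
  proof (rule mkpi_DeltaKS[OF finQ eQ sndD])
    show "\<And>q. q \<in> Q \<Longrightarrow> 0 \<le> \<delta> (fst q) (snd q)" using d0 by (auto simp: Q_def)
    have "(\<Sum>q\<in>Q. \<delta> (fst q) (snd q)) = (\<Sum>i\<in>I. \<Sum>j\<in>J. \<delta> i j)"
      by (simp add: Q_def sum.cartesian_product case_prod_beta)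
    also have "\<dots> = (\<Sum>j\<in>J. \<Sum>i\<in>I. \<delta> i j)" by (rule sum.swap)
    also have "\<dots> = 1" using dsum v1 by simp
    finally show "(\<Sum>q\<in>Q. \<delta> (fst q) (snd q)) = 1" .
  qed
  have l1: "l1dist (e ` Q) \<pi> \<pi>' \<le> D"
  proof -
    have "l1dist (e ` Q) \<pi> \<pi>' = (\<Sum>q\<in>Q. \<Sum>k\<in>UNIV. (\<lambda>a b. \<bar>a - b\<bar>) (\<gamma> (fst q) (snd q) * fst q k) (\<delta> (fst q) (snd q) * snd q k))"
      unfolding l1dist_def \<pi>_def \<pi>'_def by (rule mkpi_sum_UNIV[OF finQ eQ])
    also have "\<dots> \<le> (\<Sum>q\<in>Q. \<Sum>k\<in>UNIV. \<tau> (fst q) (snd q) k)"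
      using gt by (intro sum_mono) (auto simp: Q_def)
    also have "\<dots> = (\<Sum>(i, j)\<in>I \<times> J. \<Sum>k\<in>UNIV. \<tau> i j k)"
      by (simp add: Q_def split_def)
    also have "\<dots> = (\<Sum>i\<in>I. \<Sum>j\<in>J. \<Sum>k\<in>UNIV. \<tau> i j k)"
      by (rule sum.cartesian_product[symmetric])
    also have "\<dots> = (\<Sum>(i, j, k)\<in>I \<times> J \<times> UNIV. \<tau> i j k)"
      by (simp add: sum.cartesian_product)
    also have "\<dots> \<le> D" by (rule tsum)
    finally show ?thesis .
  qed
  define Set where "Set = {l1dist T \<pi> \<pi>' | (T :: nat set) \<pi> \<pi>'.
               finite T \<and> \<pi> \<in> DeltaKS T \<and> \<pi>' \<in> DeltaKS T \<and> psi T \<pi> = u \<and> psi T \<pi>' = v}"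
  have inS: "l1dist (e ` Q) \<pi> \<pi>' \<in> Set"
    unfolding Set_def using finQ pD pD' psi1 psi2 by blast
  have lb: "D \<le> y" if "y \<in> Set" for y
    using that part1 unfolding Set_def D_def by fastforce
  have "Inf Set = l1dist (e ` Q) \<pi> \<pi>'"
    by (rule cInf_eq_minimum[OF inS]) (use l1 lb in force)
  moreover have "l1dist (e ` Q) \<pi> \<pi>' = D" using l1 lb[OF inS] by simp
  ultimately show ?thesis by (simp add: Set_def D_def)
qed


theorem proposition3:
  fixes S :: "'s set"
  shows "(finite S \<longrightarrow>
            (\<forall>\<pi>\<in>(DeltaKS S :: ('k::finite \<times> 's \<Rightarrow> real) set). \<forall>\<pi>'\<in>DeltaKS S.
               dstar (psi S \<pi>) (psi S \<pi>') \<le> l1dist S \<pi> \<pi>'))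
       \<and> (\<forall>u\<in>(DeltaF :: (('k \<Rightarrow> real) \<Rightarrow> real) set). \<forall>v\<in>DeltaF.
            dstar u v = Inf {l1dist T \<pi> \<pi>' | (T :: nat set) \<pi> \<pi>'.
               finite T \<and> \<pi> \<in> DeltaKS T \<and> \<pi>' \<in> DeltaKS T \<and> psi T \<pi> = u \<and> psi T \<pi>' = v})"
    using part1 part2 by blast

end
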